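(* For every tournament $X$ on vertex set $V$, $U_X=U_{\overline{X}}$ and $S(U_X)=(-1)^{|V|}U_X$, where $S$ is the antipode of $QSym$.
   Context: A digraph $X=(V,E)$: $V$ finite, $E\subset\{(u,v)\in V\times V\mid u\ne v\}$; a tournament is a digraph in which for any two distinct vertices $u,v$ exactly one of $(u,v),(v,u)$ lies in $E$. $\overline{X}=(V,E^c)$ with $(u,v)\in E^c$ iff $u\ne v$ and $(u,v)\notin E$. $\Sigma_V$ is the set of bijections $\sigma:[n]\to V$, $X\mathrm{Des}(\sigma)=\{i\in[n-1]\mid(\sigma_i,\sigma_{i+1})\in E\}$; $F_I=\sum x_{i_1}\cdots x_{i_n}$ over $1\le i_1\le\cdots\le i_n$ with $i_j<i_{j+1}$ for $j\in I$; $U_X=\sum_{\sigma\in\Sigma_V}F_{X\mathrm{Des}(\sigma)}$. The antipode of $QSym$ satisfies $S(F_I)=(-1)^nF_{(I^{\mathrm{op}})^c}$ with $I^{\mathrm{op}}=\{n-i\mid i\in I\}$ and complement in $[n-1]$. *)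

theory Defs
  imports Main
begin

definition digraph :: "'v set \<Rightarrow> ('v \<times> 'v) set \<Rightarrow> bool" where
  "digraph V E \<longleftrightarrow> finite V \<and> E \<subseteq> {(u, v). u \<in> V \<and> v \<in> V \<and> u \<noteq> v}"

definition tournament :: "'v set \<Rightarrow> ('v \<times> 'v) set \<Rightarrow> bool" where
  "tournament V E \<longleftrightarrow> digraph V E \<and>
     (\<forall>u\<in>V. \<forall>v\<in>V. u \<noteq> v \<longrightarrow> ((u, v) \<in> E \<longleftrightarrow> (v, u) \<notin> E))"

definition compl_edges :: "'v set \<Rightarrow> ('v \<times> 'v) set \<Rightarrow> ('v \<times> 'v) set" where
  "compl_edges V E = {(u, v). u \<in> V \<and> v \<in> V \<and> u \<noteq> v \<and> (u, v) \<notin> E}"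

definition Sigma_V :: "'v set \<Rightarrow> (nat \<Rightarrow> 'v) set" where
  "Sigma_V V = {\<sigma>. bij_betw \<sigma> {1..card V} V \<and> (\<forall>j. j \<notin> {1..card V} \<longrightarrow> \<sigma> j = undefined)}"

definition XDes :: "'v set \<Rightarrow> ('v \<times> 'v) set \<Rightarrow> (nat \<Rightarrow> 'v) \<Rightarrow> nat set" where
  "XDes V E \<sigma> = {i \<in> {1..card V - 1}. (\<sigma> i, \<sigma> (Suc i)) \<in> E}"

text \<open>Formal power series in the variables x_1, x_2, ... with integer
  coefficients: a monomial is an exponent function alpha :: nat => nat
  (alpha k = exponent of x_k), a series maps monomials to coefficients.\<close>
type_synonym series = "(nat \<Rightarrow> nat) \<Rightarrow> int"

definition F :: "nat \<Rightarrow> nat set \<Rightarrow> series" where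
  "F n I = (\<lambda>\<alpha>. int (card {s :: nat \<Rightarrow> nat.
      (\<forall>j. j \<notin> {1..n} \<longrightarrow> s j = 0) \<and> (\<forall>j\<in>{1..n}. 1 \<le> s j) \<and>
      (\<forall>j. 1 \<le> j \<and> j < n \<longrightarrow> s j \<le> s (Suc j)) \<and>
      (\<forall>j\<in>I. s j < s (Suc j)) \<and>
      (\<forall>k. \<alpha> k = card {j \<in> {1..n}. s j = k})}))"

definition U :: "'v set \<Rightarrow> ('v \<times> 'v) set \<Rightarrow> series" where
  "U V E = (\<lambda>\<alpha>. \<Sum>\<sigma>\<in>Sigma_V V. F (card V) (XDes V E \<sigma>) \<alpha>)"

definition op_set :: "nat \<Rightarrow> nat set \<Rightarrow> nat set" where
  "op_set n I = (\<lambda>i. n - i) ` I"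

text \<open>The antipode of QSym on the homogeneous degree-n component, defined as
  the linear extension of S(F_I) = (-1)^n F_((I^op)^c) (complement in [n-1]).\<close>
definition antipode :: "nat \<Rightarrow> series \<Rightarrow> series" where
  "antipode n f = (THE g. \<exists>c :: nat set \<Rightarrow> int.
      f = (\<lambda>\<alpha>. \<Sum>I\<in>Pow {1..n - 1}. c I * F n I \<alpha>) \<and>
      g = (\<lambda>\<alpha>. \<Sum>I\<in>Pow {1..n - 1}. c I * (-1) ^ n * F n ({1..n - 1} - op_set n I) \<alpha>))"

end

theory Submission
  imports Defs "HOL-Library.FuncSet"
begin

definition Fset :: "nat \<Rightarrow> nat set \<Rightarrow> (nat \<Rightarrow> nat) \<Rightarrow> (nat \<Rightarrow> nat) set" where
  "Fset n I \<alpha> = {s :: nat \<Rightarrow> nat.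
      (\<forall>j. j \<notin> {1..n} \<longrightarrow> s j = 0) \<and> (\<forall>j\<in>{1..n}. 1 \<le> s j) \<and>
      (\<forall>j. 1 \<le> j \<and> j < n \<longrightarrow> s j \<le> s (Suc j)) \<and>
      (\<forall>j\<in>I. s j < s (Suc j)) \<and>
      (\<forall>k. \<alpha> k = card {j \<in> {1..n}. s j = k})}"

lemma F_Fset: "F n I \<alpha> = int (card (Fset n I \<alpha>))"
  unfolding F_def Fset_def by simp

lemma mono_on_seg:
  assumes "\<forall>j. 1 \<le> j \<and> j < n \<longrightarrow> s j \<le> (s (Suc j) :: nat)"
  shows "1 \<le> i \<Longrightarrow> i \<le> j \<Longrightarrow> j \<le> n \<Longrightarrow> s i \<le> s j"
proof (induction j rule: nat.induct)
  case zero then show ?case by simp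
next
  case (Suc j)
  show ?case
  proof (cases "i = Suc j")
    case False
    then have "i \<le> j" using Suc by simp
    then have "s i \<le> s j" using Suc by simp
    also have "s j \<le> s (Suc j)" using assms Suc \<open>i \<le> j\<close> by simp
    finally show ?thesis .
  qed simp
qed

lemma card_le_count:
  fixes s :: "nat \<Rightarrow> nat"
  shows "card {j \<in> {1..n}. s j \<le> k} = (\<Sum>k'\<le>k. card {j \<in> {1..n}. s j = k'})"
proof (induction k)
  case 0 then show ?case by simp
next
  case (Suc k)
  have "{j \<in> {1..n}. s j \<le> Suc k} = {j \<in> {1..n}. s j \<le> k} \<union> {j \<in> {1..n}. s j = Suc k}"
    by auto
  then have "card {j \<in> {1..n}. s j \<le> Suc k} = card {j \<in> {1..n}. s j \<le> k} + card {j \<in> {1..n}. s j = Suc k}"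
    by (simp add: card_Un_disjoint disjoint_iff)
  then show ?case using Suc by simp
qed

lemma le_iff_count:
  fixes s :: "nat \<Rightarrow> nat"
  assumes m: "\<forall>j. 1 \<le> j \<and> j < n \<longrightarrow> s j \<le> s (Suc j)" and j: "j \<in> {1..n}"
  shows "s j \<le> k \<longleftrightarrow> j \<le> card {i \<in> {1..n}. s i \<le> k}"
proof
  assume "s j \<le> k"
  then have "{1..j} \<subseteq> {i \<in> {1..n}. s i \<le> k}" using mono_on_seg[OF m] j by force
  from card_mono[OF _ this] show "j \<le> card {i \<in> {1..n}. s i \<le> k}" by simp
next
  assume a: "j \<le> card {i \<in> {1..n}. s i \<le> k}"
  show "s j \<le> k"
  proof (rule ccontr)
    assume "\<not> s j \<le> k"
    then have "{i \<in> {1..n}. s i \<le> k} \<subseteq> {1..j-1}" using mono_on_seg[OF m, of j] j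
      by (auto, metis le_trans not_le not_less_eq_eq Suc_pred le_SucE diff_Suc_1 leD le_eq_less_or_eq)
    from card_mono[OF _ this] a j show False by (simp, arith)
  qed
qed

lemma content_unique:
  fixes s t :: "nat \<Rightarrow> nat"
  assumes "\<forall>j. j \<notin> {1..n} \<longrightarrow> s j = 0" "\<forall>j. j \<notin> {1..n} \<longrightarrow> t j = 0"
    and ms: "\<forall>j. 1 \<le> j \<and> j < n \<longrightarrow> s j \<le> s (Suc j)"
    and mt: "\<forall>j. 1 \<le> j \<and> j < n \<longrightarrow> t j \<le> t (Suc j)"
    and c: "\<forall>k. card {j \<in> {1..n}. s j = k} = card {j \<in> {1..n}. t j = k}"
  shows "s = t"
proof
  fix j
  show "s j = t j"
  proof (cases "j \<in> {1..n}")
    case True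
    have N: "\<And>k. card {i \<in> {1..n}. s i \<le> k} = card {i \<in> {1..n}. t i \<le> k}"
      by (simp only: card_le_count c)
    have "s j \<le> t j" using le_iff_count[OF ms True, of "t j"] le_iff_count[OF mt True, of "t j"] N[of "t j"] by simp
    moreover have "t j \<le> s j" using le_iff_count[OF ms True, of "s j"] le_iff_count[OF mt True, of "s j"] N[of "s j"] by simp
    ultimately show ?thesis by simp
  qed (use assms in auto)
qed

lemma finite_Fset: "finite (Fset n I \<alpha>)"
proof (cases "Fset n I \<alpha> = {}")
  case False
  then obtain s0 where "s0 \<in> Fset n I \<alpha>" by auto
  then have "Fset n I \<alpha> \<subseteq> {s0}" unfolding Fset_def
    using content_unique[of n] by auto
  then show ?thesis using finite_subset by blast
qed simp

definition Good :: "nat \<Rightarrow> ('v \<times> 'v) set \<Rightarrow> (nat \<Rightarrow> 'v) \<Rightarrow> (nat \<Rightarrow> nat) \<Rightarrow> bool" where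
  "Good n E \<sigma> s \<longleftrightarrow> (\<forall>j\<in>{1..n-1}. s j = s (Suc j) \<longrightarrow> (\<sigma> j, \<sigma> (Suc j)) \<notin> E)"

lemma Fset_XDes:
  "Fset (card V) (XDes V E \<sigma>) \<alpha> = {s \<in> Fset (card V) {} \<alpha>. Good (card V) E \<sigma> s}"
proof -
  let ?n = "card V"
  have "(\<forall>j\<in>XDes V E \<sigma>. s j < s (Suc j)) \<longleftrightarrow> Good ?n E \<sigma> s"
    if m: "\<forall>j. 1 \<le> j \<and> j < ?n \<longrightarrow> s j \<le> s (Suc j)" for s :: "nat \<Rightarrow> nat"
  proof
    assume "\<forall>j\<in>XDes V E \<sigma>. s j < s (Suc j)"
    then show "Good ?n E \<sigma> s" unfolding Good_def XDes_def by auto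
  next
    assume "Good ?n E \<sigma> s"
    show "\<forall>j\<in>XDes V E \<sigma>. s j < s (Suc j)"
    proof
      fix j assume j: "j \<in> XDes V E \<sigma>"
      then have j1: "j \<in> {1..?n-1}" and p: "(\<sigma> j, \<sigma> (Suc j)) \<in> E" unfolding XDes_def by auto
      then have "s j \<noteq> s (Suc j)" using \<open>Good ?n E \<sigma> s\<close> unfolding Good_def by blast
      moreover have "s j \<le> s (Suc j)" using m j1 by auto
      ultimately show "s j < s (Suc j)" by simp
    qed
  qed
  then show ?thesis unfolding Fset_def by auto
qed

lemma finite_Sigma_V: "finite V \<Longrightarrow> finite (Sigma_V V)"
proof -
  assume "finite V"
  have "Sigma_V V \<subseteq> PiE {1..card V} (\<lambda>_. V)"
    unfolding Sigma_V_def PiE_def extensional_def Pi_def bij_betw_def by auto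
  then show ?thesis using finite_PiE[of "{1..card V}" "\<lambda>_. V"] \<open>finite V\<close> finite_subset by auto
qed

lemma U_card:
  assumes "finite V"
  shows "U V E \<alpha> = int (card (SIGMA \<sigma>:Sigma_V V. {s \<in> Fset (card V) {} \<alpha>. Good (card V) E \<sigma> s}))"
proof -
  have "U V E \<alpha> = (\<Sum>\<sigma>\<in>Sigma_V V. int (card {s \<in> Fset (card V) {} \<alpha>. Good (card V) E \<sigma> s}))"
    unfolding U_def F_Fset Fset_XDes by simp
  also have "\<dots> = int (\<Sum>\<sigma>\<in>Sigma_V V. card {s \<in> Fset (card V) {} \<alpha>. Good (card V) E \<sigma> s})"
    by simp
  also have "(\<Sum>\<sigma>\<in>Sigma_V V. card {s \<in> Fset (card V) {} \<alpha>. Good (card V) E \<sigma> s})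
     = card (SIGMA \<sigma>:Sigma_V V. {s \<in> Fset (card V) {} \<alpha>. Good (card V) E \<sigma> s})"
    using finite_Sigma_V[OF assms] finite_Fset by (subst card_SigmaI) auto
  finally show ?thesis .
qed

definition pi :: "nat \<Rightarrow> (nat \<Rightarrow> nat) \<Rightarrow> nat \<Rightarrow> nat" where
  "pi n s j = (if j \<in> {1..n} then Min {i \<in> {1..n}. s i = s j} + Max {i \<in> {1..n}. s i = s j} - j else j)"

lemma blo_props:
  fixes s :: "nat \<Rightarrow> nat"
  assumes m: "\<forall>j. 1 \<le> j \<and> j < n \<longrightarrow> s j \<le> s (Suc j)" and j: "j \<in> {1..n}"
  defines "a \<equiv> Min {i \<in> {1..n}. s i = s j}" and "b \<equiv> Max {i \<in> {1..n}. s i = s j}"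
  shows "a \<le> j" "j \<le> b" "1 \<le> a" "b \<le> n" "\<And>i. a \<le> i \<Longrightarrow> i \<le> b \<Longrightarrow> s i = s j"
proof -
  have f: "finite {i \<in> {1..n}. s i = s j}" by simp
  have jin: "j \<in> {i \<in> {1..n}. s i = s j}" using j by simp
  have ain: "a \<in> {i \<in> {1..n}. s i = s j}" unfolding a_def using f jin Min_in by blast
  have bin: "b \<in> {i \<in> {1..n}. s i = s j}" unfolding b_def using f jin Max_in by blast
  show "a \<le> j" unfolding a_def using f jin by simp
  show "j \<le> b" unfolding b_def using f jin by simp
  show "1 \<le> a" using ain by simp
  show "b \<le> n" using bin by simp
  fix i assume "a \<le> i" "i \<le> b"
  then have "s a \<le> s i" "s i \<le> s b" using mono_on_seg[OF m, of a i] mono_on_seg[OF m, of i b] ain bin by auto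
  then show "s i = s j" using ain bin by simp
qed

lemma pi_eq: "j \<in> {1..n} \<Longrightarrow> pi n s j = Min {i \<in> {1..n}. s i = s j} + Max {i \<in> {1..n}. s i = s j} - j"
  unfolding pi_def by simp

lemma pi_in:
  fixes s :: "nat \<Rightarrow> nat"
  assumes m: "\<forall>j. 1 \<le> j \<and> j < n \<longrightarrow> s j \<le> s (Suc j)" and j: "j \<in> {1..n}"
  shows "pi n s j \<in> {1..n} \<and> s (pi n s j) = s j"
proof -
  define a where "a = Min {i \<in> {1..n}. s i = s j}"
  define b where "b = Max {i \<in> {1..n}. s i = s j}"
  have p: "pi n s j = a + b - j" unfolding a_def b_def using pi_eq[OF j] .
  note h = blo_props[OF m j, folded a_def b_def]
  have r: "a \<le> a + b - j" "a + b - j \<le> b" using h(1,2) by linarith+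
  have "s (a + b - j) = s j" using h(5)[OF r] .
  then show ?thesis using h(3,4) r p by simp
qed

lemma pi_pi:
  fixes s :: "nat \<Rightarrow> nat"
  assumes m: "\<forall>j. 1 \<le> j \<and> j < n \<longrightarrow> s j \<le> s (Suc j)"
  shows "pi n s (pi n s j) = j"
proof (cases "j \<in> {1..n}")
  case True
  define a where "a = Min {i \<in> {1..n}. s i = s j}"
  define b where "b = Max {i \<in> {1..n}. s i = s j}"
  have p: "pi n s j = a + b - j" unfolding a_def b_def using pi_eq[OF True] .
  note h = blo_props[OF m True, folded a_def b_def]
  have pin: "pi n s j \<in> {1..n}" and ps: "s (pi n s j) = s j" using pi_in[OF m True] by auto
  have "pi n s (pi n s j) = a + b - pi n s j"
    unfolding a_def b_def using pi_eq[OF pin] ps by simp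
  then show ?thesis using p h by simp
next
  case False
  then have e: "pi n s j = j" unfolding pi_def by auto
  show ?thesis by (simp only: e)
qed

lemma pi_Suc:
  fixes s :: "nat \<Rightarrow> nat"
  assumes m: "\<forall>j. 1 \<le> j \<and> j < n \<longrightarrow> s j \<le> s (Suc j)" and j: "1 \<le> j" "Suc j \<le> n"
    and e: "s j = s (Suc j)"
  shows "Suc (pi n s (Suc j)) = pi n s j"
proof -
  have j1: "j \<in> {1..n}" and j2: "Suc j \<in> {1..n}" using j by auto
  define a where "a = Min {i \<in> {1..n}. s i = s j}"
  define b where "b = Max {i \<in> {1..n}. s i = s j}"
  have p: "pi n s j = a + b - j" unfolding a_def b_def using pi_eq[OF j1] .
  have p2: "pi n s (Suc j) = a + b - Suc j" unfolding a_def b_def using pi_eq[OF j2] e by simp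
  have "Suc j \<le> b" using blo_props(2)[OF m j2] e unfolding b_def by simp
  then show ?thesis using p p2 by simp
qed

lemma Phi_maps:
  assumes \<sigma>: "\<sigma> \<in> Sigma_V V" and s: "s \<in> Fset (card V) {} \<alpha>" and g: "Good (card V) E \<sigma> s"
  shows "\<sigma> \<circ> pi (card V) s \<in> Sigma_V V \<and> Good (card V) (E\<inverse>) (\<sigma> \<circ> pi (card V) s) s"
proof -
  let ?n = "card V" let ?p = "pi ?n s"
  have m: "\<forall>j. 1 \<le> j \<and> j < ?n \<longrightarrow> s j \<le> s (Suc j)" using s unfolding Fset_def by auto
  have bp: "bij_betw ?p {1..?n} {1..?n}"
    by (rule bij_betw_byWitness[where f' = ?p]) (use pi_pi[OF m] pi_in[OF m] in auto)
  have bs: "bij_betw \<sigma> {1..?n} V" using \<sigma> unfolding Sigma_V_def by auto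
  have "\<sigma> \<circ> ?p \<in> Sigma_V V"
    unfolding Sigma_V_def using bij_betw_trans[OF bp bs] \<sigma> unfolding Sigma_V_def
    by (auto simp: pi_def)
  moreover have "Good ?n (E\<inverse>) (\<sigma> \<circ> ?p) s"
    unfolding Good_def
  proof (intro ballI impI)
    fix j assume j: "j \<in> {1..?n-1}" and e: "s j = s (Suc j)"
    have j1: "1 \<le> j" "Suc j \<le> ?n" using j by auto
    let ?i = "?p (Suc j)"
    have si: "Suc ?i = ?p j" using pi_Suc[OF m j1 e] .
    have "?i \<in> {1..?n}" "s ?i = s (Suc j)" using pi_in[OF m] j1 by auto
    moreover have "?p j \<in> {1..?n}" "s (?p j) = s j" using pi_in[OF m] j1 by auto
    ultimately have "?i \<in> {1..?n-1}" "s ?i = s (Suc ?i)" using si e by auto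
    then have "(\<sigma> ?i, \<sigma> (Suc ?i)) \<notin> E" using g unfolding Good_def by blast
    then show "((\<sigma> \<circ> ?p) j, (\<sigma> \<circ> ?p) (Suc j)) \<notin> E\<inverse>" using si by simp
  qed
  ultimately show ?thesis by simp
qed

definition Phi :: "nat \<Rightarrow> (nat \<Rightarrow> 'v) \<times> (nat \<Rightarrow> nat) \<Rightarrow> (nat \<Rightarrow> 'v) \<times> (nat \<Rightarrow> nat)" where
  "Phi n x = (fst x \<circ> pi n (snd x), snd x)"

lemma card_le_conv:
  assumes "finite V"
  shows "card (SIGMA \<sigma>:Sigma_V V. {s \<in> Fset (card V) {} \<alpha>. Good (card V) E \<sigma> s})
      \<le> card (SIGMA \<sigma>:Sigma_V V. {s \<in> Fset (card V) {} \<alpha>. Good (card V) (E\<inverse>) \<sigma> s})"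
proof (rule card_inj_on_le[where f = "Phi (card V)"])
  show "finite (SIGMA \<sigma>:Sigma_V V. {s \<in> Fset (card V) {} \<alpha>. Good (card V) (E\<inverse>) \<sigma> s})"
    using finite_Sigma_V[OF assms] finite_Fset by auto
  show "Phi (card V) ` (SIGMA \<sigma>:Sigma_V V. {s \<in> Fset (card V) {} \<alpha>. Good (card V) E \<sigma> s})
      \<subseteq> (SIGMA \<sigma>:Sigma_V V. {s \<in> Fset (card V) {} \<alpha>. Good (card V) (E\<inverse>) \<sigma> s})"
    using Phi_maps unfolding Phi_def by fastforce
  show "inj_on (Phi (card V)) (SIGMA \<sigma>:Sigma_V V. {s \<in> Fset (card V) {} \<alpha>. Good (card V) E \<sigma> s})"
  proof (rule inj_on_inverseI[where g = "Phi (card V)"])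
    fix x assume "x \<in> (SIGMA \<sigma>:Sigma_V V. {s \<in> Fset (card V) {} \<alpha>. Good (card V) E \<sigma> s})"
    then have m: "\<forall>j. 1 \<le> j \<and> j < card V \<longrightarrow> snd x j \<le> snd x (Suc j)" unfolding Fset_def by auto
    show "Phi (card V) (Phi (card V) x) = x" unfolding Phi_def
      using pi_pi[OF m] by (cases x) (auto simp: fun_eq_iff)
  qed
qed

lemma U_conv: "finite V \<Longrightarrow> U V E = U V (E\<inverse>)"
  using card_le_conv[of V _ E] card_le_conv[of V _ "E\<inverse>"]
  by (auto simp: fun_eq_iff U_card intro: antisym)

lemma compl_conv: "tournament V E \<Longrightarrow> compl_edges V E = E\<inverse>"
  unfolding tournament_def digraph_def compl_edges_def by auto

definition rv :: "nat \<Rightarrow> (nat \<Rightarrow> 'v) \<Rightarrow> nat \<Rightarrow> 'v" where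
  "rv n \<sigma> j = (if j \<in> {1..n} then \<sigma> (Suc n - j) else undefined)"

lemma rv_in: "\<sigma> \<in> Sigma_V V \<Longrightarrow> rv (card V) \<sigma> \<in> Sigma_V V"
proof -
  assume \<sigma>: "\<sigma> \<in> Sigma_V V"
  let ?n = "card V"
  have br: "bij_betw (\<lambda>j. Suc ?n - j) {1..?n} {1..?n}"
    by (rule bij_betw_byWitness[where f' = "\<lambda>j. Suc ?n - j"]) auto
  have bs: "bij_betw \<sigma> {1..?n} V" using \<sigma> unfolding Sigma_V_def by auto
  have "bij_betw (\<sigma> \<circ> (\<lambda>j. Suc ?n - j)) {1..?n} V" using bij_betw_trans[OF br bs] .
  then have "bij_betw (rv ?n \<sigma>) {1..?n} V"
    by (rule bij_betw_cong[THEN iffD1, rotated]) (auto simp: rv_def)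
  then show ?thesis unfolding Sigma_V_def by (auto simp: rv_def)
qed

lemma rv_rv: "\<sigma> \<in> Sigma_V V \<Longrightarrow> rv (card V) (rv (card V) \<sigma>) = \<sigma>"
  unfolding Sigma_V_def by (auto simp: rv_def fun_eq_iff)

lemma XDes_rv:
  assumes t: "tournament V E" and \<sigma>: "\<sigma> \<in> Sigma_V V"
  shows "XDes V E (rv (card V) \<sigma>) = {1..card V - 1} - op_set (card V) (XDes V E \<sigma>)"
proof (rule set_eqI)
  fix x
  let ?n = "card V"
  have bs: "bij_betw \<sigma> {1..?n} V" using \<sigma> unfolding Sigma_V_def by auto
  show "x \<in> XDes V E (rv ?n \<sigma>) \<longleftrightarrow> x \<in> {1..?n - 1} - op_set ?n (XDes V E \<sigma>)"
  proof (cases "x \<in> {1..?n - 1}")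
    case True
    then have x: "1 \<le> x" "x < ?n" by auto
    have l: "x \<in> XDes V E (rv ?n \<sigma>) \<longleftrightarrow> (\<sigma> (Suc ?n - x), \<sigma> (?n - x)) \<in> E"
      using x unfolding XDes_def rv_def by auto
    have opx: "x \<in> op_set ?n (XDes V E \<sigma>) \<longleftrightarrow> ?n - x \<in> XDes V E \<sigma>"
    proof
      assume "x \<in> op_set ?n (XDes V E \<sigma>)"
      then obtain i where "i \<in> XDes V E \<sigma>" "x = ?n - i" unfolding op_set_def by auto
      moreover then have "i \<le> ?n" unfolding XDes_def by auto
      ultimately show "?n - x \<in> XDes V E \<sigma>" by (simp add: diff_diff_cancel)
    next
      assume "?n - x \<in> XDes V E \<sigma>"
      then have "?n - (?n - x) \<in> op_set ?n (XDes V E \<sigma>)" unfolding op_set_def by blast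
      then show "x \<in> op_set ?n (XDes V E \<sigma>)" using x by simp
    qed
    have r: "?n - x \<in> XDes V E \<sigma> \<longleftrightarrow> (\<sigma> (?n - x), \<sigma> (Suc ?n - x)) \<in> E"
      using x unfolding XDes_def by (auto simp: Suc_diff_le)
    have mem: "Suc ?n - x \<in> {1..?n}" "?n - x \<in> {1..?n}" using x by auto
    then have inV: "\<sigma> (?n - x) \<in> V" "\<sigma> (Suc ?n - x) \<in> V" using bij_betwE[OF bs] by blast+
    have ne: "\<sigma> (?n - x) \<noteq> \<sigma> (Suc ?n - x)"
    proof
      assume "\<sigma> (?n - x) = \<sigma> (Suc ?n - x)"
      then have "?n - x = Suc ?n - x" using inj_onD[OF bij_betw_imp_inj_on[OF bs]] mem by blast
      then show False using x by simp
    qed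
    have "(\<sigma> (Suc ?n - x), \<sigma> (?n - x)) \<in> E \<longleftrightarrow> (\<sigma> (?n - x), \<sigma> (Suc ?n - x)) \<notin> E"
      using t inV ne unfolding tournament_def by metis
    then show ?thesis using True l opx r by blast
  next
    case False
    then show ?thesis unfolding XDes_def by auto
  qed
qed

lemma group_XDes:
  fixes h :: "nat set \<Rightarrow> int"
  assumes "finite V"
  shows "(\<Sum>\<sigma>\<in>Sigma_V V. h (XDes V E \<sigma>))
     = (\<Sum>I\<in>Pow {1..card V - 1}. int (card {\<sigma> \<in> Sigma_V V. XDes V E \<sigma> = I}) * h I)"
proof -
  have "(\<Sum>\<sigma>\<in>Sigma_V V. h (XDes V E \<sigma>))
      = (\<Sum>I\<in>Pow {1..card V - 1}. \<Sum>\<sigma>\<in>{\<sigma>. \<sigma> \<in> Sigma_V V \<and> XDes V E \<sigma> = I}. h (XDes V E \<sigma>))"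
    by (rule sum.group[symmetric]) (auto simp: finite_Sigma_V[OF assms] XDes_def)
  also have "\<dots> = (\<Sum>I\<in>Pow {1..card V - 1}. \<Sum>\<sigma>\<in>{\<sigma>. \<sigma> \<in> Sigma_V V \<and> XDes V E \<sigma> = I}. h I)"
    by (rule sum.cong) auto
  also have "\<dots> = (\<Sum>I\<in>Pow {1..card V - 1}. int (card {\<sigma> \<in> Sigma_V V. XDes V E \<sigma> = I}) * h I)"
    by simp
  finally show ?thesis .
qed

definition sJ :: "nat \<Rightarrow> nat set \<Rightarrow> nat \<Rightarrow> nat" where
  "sJ n J j = (if j \<in> {1..n} then Suc (card {i \<in> J. i < j}) else 0)"

definition aJ :: "nat \<Rightarrow> nat set \<Rightarrow> nat \<Rightarrow> nat" where
  "aJ n J k = card {j \<in> {1..n}. sJ n J j = k}"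

lemma sJ_in:
  assumes J: "J \<subseteq> {1..n-1}"
  shows "sJ n J \<in> Fset n J (aJ n J)"
proof -
  have fJ: "finite J" using J finite_subset by blast
  have m: "sJ n J j \<le> sJ n J (Suc j)" if "1 \<le> j" "j < n" for j
  proof -
    have "card {i \<in> J. i < j} \<le> card {i \<in> J. i < Suc j}"
      by (rule card_mono) (use fJ in auto)
    then show ?thesis using that by (simp add: sJ_def)
  qed
  have st: "sJ n J j < sJ n J (Suc j)" if "j \<in> J" for j
  proof -
    have "j \<in> {1..n-1}" using that J by blast
    then have jr: "1 \<le> j" "j < n" by auto
    have "{i \<in> J. i < Suc j} = insert j {i \<in> J. i < j}" using that by auto
    then have "card {i \<in> J. i < Suc j} = Suc (card {i \<in> J. i < j})" using fJ by simp
    then show ?thesis using jr by (simp add: sJ_def)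
  qed
  show ?thesis unfolding Fset_def using m st by (auto simp: sJ_def aJ_def)
qed

lemma F_nz:
  assumes J: "J \<subseteq> {1..n-1}"
  shows "F n J (aJ n J) \<noteq> 0"
proof -
  have "card (Fset n J (aJ n J)) \<noteq> 0" using sJ_in[OF J] finite_Fset by (metis card_0_eq empty_iff)
  then show ?thesis by (simp add: F_Fset)
qed

lemma F_z:
  assumes I: "I \<subseteq> {1..n-1}" and J: "J \<subseteq> {1..n-1}" and nsub: "\<not> I \<subseteq> J"
  shows "F n I (aJ n J) = 0"
proof -
  have "Fset n I (aJ n J) = {}"
  proof (rule ccontr)
    assume "Fset n I (aJ n J) \<noteq> {}"
    then obtain s where s: "s \<in> Fset n I (aJ n J)" by auto
    have sj: "sJ n J \<in> Fset n J (aJ n J)" using sJ_in[OF J] .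
    have "s = sJ n J"
      by (rule content_unique[of n]) (use s sj in \<open>auto simp: Fset_def\<close>)
    moreover obtain j where j: "j \<in> I" "j \<notin> J" using nsub by auto
    ultimately have "sJ n J j < sJ n J (Suc j)" using s unfolding Fset_def by auto
    moreover have "{i \<in> J. i < Suc j} = {i \<in> J. i < j}" using j by (auto simp: less_Suc_eq)
    moreover have "j \<in> {1..n-1}" using j I by blast
    then have "1 \<le> j" "j < n" by auto
    ultimately show False by (simp add: sJ_def)
  qed
  then show ?thesis by (simp add: F_Fset)
qed

lemma indep:
  fixes d :: "nat set \<Rightarrow> int"
  assumes z: "\<And>\<alpha>. (\<Sum>I\<in>Pow {1..n-1}. d I * F n I \<alpha>) = 0"
  shows "\<forall>I\<in>Pow {1..n-1}. d I = 0"
proof -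
  have "\<forall>J. J \<in> Pow {1..n-1} \<longrightarrow> card J = k \<longrightarrow> d J = 0" for k
  proof (induction k rule: less_induct)
    case (less k)
    show ?case
    proof (intro allI impI)
      fix J assume J: "J \<in> Pow {1..n-1}" and ck: "card J = k"
      have fJ: "finite J" using J finite_subset by auto
      have rest: "(\<Sum>I\<in>Pow {1..n-1} - {J}. d I * F n I (aJ n J)) = 0"
      proof (rule sum.neutral, rule ballI)
        fix I assume I: "I \<in> Pow {1..n-1} - {J}"
        show "d I * F n I (aJ n J) = 0"
        proof (cases "I \<subseteq> J")
          case True
          then have "I \<subset> J" using I by auto
          then have "card I < k" using ck fJ psubset_card_mono by blast
          then have "d I = 0" using less I by auto
          then show ?thesis by simp
        next
          case False
          then show ?thesis using F_z[of I n J] I J by auto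
        qed
      qed
      have "0 = (\<Sum>I\<in>Pow {1..n-1}. d I * F n I (aJ n J))" using z by simp
      also have "\<dots> = d J * F n J (aJ n J) + (\<Sum>I\<in>Pow {1..n-1} - {J}. d I * F n I (aJ n J))"
        using J by (subst sum.remove[of _ J]) auto
      finally have "d J * F n J (aJ n J) = 0" using rest by simp
      then show "d J = 0" using F_nz[of J n] J by auto
    qed
  qed
  then show ?thesis by blast
qed

theorem mainTheorem17:
  fixes V :: "'v set" and E :: "('v \<times> 'v) set"
  assumes "tournament V E"
  shows "U V E = U V (compl_edges V E) \<and>
         antipode (card V) (U V E) = (\<lambda>\<alpha>. (-1) ^ card V * U V E \<alpha>)"
proof
  have fV: "finite V" using assms unfolding tournament_def digraph_def by auto
  show "U V E = U V (compl_edges V E)" using U_conv[OF fV] compl_conv[OF assms] by simp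
  let ?n = "card V"
  let ?S = "Sigma_V V"
  let ?P = "Pow {1..?n - 1}"
  define c where "c I = int (card {\<sigma> \<in> ?S. XDes V E \<sigma> = I})" for I
  define \<phi> where "\<phi> I = {1..?n - 1} - op_set ?n I" for I
  have Udec: "U V E = (\<lambda>\<alpha>. \<Sum>I\<in>?P. c I * F ?n I \<alpha>)"
    unfolding U_def c_def by (rule ext, rule group_XDes[OF fV])
  have key: "(\<lambda>\<alpha>. \<Sum>I\<in>?P. c I * (-1) ^ ?n * F ?n ({1..?n - 1} - op_set ?n I) \<alpha>)
      = (\<lambda>\<alpha>. (-1) ^ ?n * U V E \<alpha>)"
  proof
    fix \<alpha>
    have "(\<Sum>I\<in>?P. c I * (-1) ^ ?n * F ?n ({1..?n - 1} - op_set ?n I) \<alpha>)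
        = (-1) ^ ?n * (\<Sum>I\<in>?P. c I * F ?n (\<phi> I) \<alpha>)"
      unfolding \<phi>_def sum_distrib_left by (rule sum.cong[OF refl]) (simp add: ac_simps)
    also have "(\<Sum>I\<in>?P. c I * F ?n (\<phi> I) \<alpha>) = (\<Sum>\<sigma>\<in>?S. F ?n (\<phi> (XDes V E \<sigma>)) \<alpha>)"
      unfolding c_def by (rule group_XDes[OF fV, symmetric])
    also have "\<dots> = (\<Sum>\<sigma>\<in>?S. F ?n (XDes V E (rv ?n \<sigma>)) \<alpha>)"
      unfolding \<phi>_def by (rule sum.cong) (auto simp: XDes_rv[OF assms])
    also have "\<dots> = (\<Sum>\<sigma>\<in>?S. F ?n (XDes V E \<sigma>) \<alpha>)"
      by (rule sum.reindex_bij_witness[where i = "rv ?n" and j = "rv ?n"])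
         (auto simp: rv_rv rv_in)
    finally show "(\<Sum>I\<in>?P. c I * (-1) ^ ?n * F ?n ({1..?n - 1} - op_set ?n I) \<alpha>)
        = (-1) ^ ?n * U V E \<alpha>" unfolding U_def by simp
  qed
  show "antipode ?n (U V E) = (\<lambda>\<alpha>. (-1) ^ ?n * U V E \<alpha>)"
    unfolding antipode_def
  proof (rule the_equality)
    show "\<exists>c. U V E = (\<lambda>\<alpha>. \<Sum>I\<in>?P. c I * F ?n I \<alpha>) \<and>
        (\<lambda>\<alpha>. (-1) ^ ?n * U V E \<alpha>) = (\<lambda>\<alpha>. \<Sum>I\<in>?P. c I * (-1) ^ ?n * F ?n ({1..?n - 1} - op_set ?n I) \<alpha>)"
      by (intro exI[of _ c] conjI Udec key[symmetric])
  next
    fix g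
    assume "\<exists>c'. U V E = (\<lambda>\<alpha>. \<Sum>I\<in>?P. c' I * F ?n I \<alpha>) \<and>
        g = (\<lambda>\<alpha>. \<Sum>I\<in>?P. c' I * (-1) ^ ?n * F ?n ({1..?n - 1} - op_set ?n I) \<alpha>)"
    then obtain c' where c1: "U V E = (\<lambda>\<alpha>. \<Sum>I\<in>?P. c' I * F ?n I \<alpha>)"
      and g: "g = (\<lambda>\<alpha>. \<Sum>I\<in>?P. c' I * (-1) ^ ?n * F ?n ({1..?n - 1} - op_set ?n I) \<alpha>)" by blast
    have "\<And>\<alpha>. (\<Sum>I\<in>?P. (c I - c' I) * F ?n I \<alpha>) = 0"
    proof -
      fix \<alpha>
      have "(\<Sum>I\<in>?P. c I * F ?n I \<alpha>) = (\<Sum>I\<in>?P. c' I * F ?n I \<alpha>)"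
        using fun_cong[OF Udec, of \<alpha>] fun_cong[OF c1, of \<alpha>] by simp
      then show "(\<Sum>I\<in>?P. (c I - c' I) * F ?n I \<alpha>) = 0"
        by (simp add: left_diff_distrib sum_subtractf)
    qed
    then have "\<forall>I\<in>?P. c I - c' I = 0" by (rule indep)
    then have "g = (\<lambda>\<alpha>. \<Sum>I\<in>?P. c I * (-1) ^ ?n * F ?n ({1..?n - 1} - op_set ?n I) \<alpha>)"
      unfolding g by (intro ext sum.cong) auto
    then show "g = (\<lambda>\<alpha>. (-1) ^ ?n * U V E \<alpha>)" using key by simp
  qed
qed

end
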